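(* Fix $\ell \in \mathbb{R}_{>0}$. The map $f \mapsto C(f)$ is one-to-one when restricted to barcodes of the form $f = \sum_{i=1}^n x^{\alpha_i}y^{\ell}$ (with $n\ge 0$ and $\alpha_i\in\mathbb{R}$ arbitrary), i.e. barcodes all of whose bars have lifespan $\ell$.
   Context: A barcode is a finite formal sum $f = \sum_{i=1}^n x^{\alpha_i}y^{\ell_i}$ with $\alpha_i \in \mathbb{R}$, $\ell_i \in \mathbb{R}_{>0}$ (a finite multiset of bars $x^{\alpha_i}y^{\ell_i}$). Its critical series is $C(f) = \sum_i x^{\alpha_i} - \sum_i x^{\alpha_i+\ell_i}$, a finite integer combination of symbols $x^g$, $g\in\mathbb{R}$. *)

theory Defs
  imports "HOL-Library.Multiset" Complex_Main
begin

text \<open>A barcode is a finite multiset of bars x^alpha y^l, represented as pairs (alpha, l)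
  with l > 0.\<close>
type_synonym barcode = "(real \<times> real) multiset"

definition is_barcode :: "barcode \<Rightarrow> bool" where
  "is_barcode f \<longleftrightarrow> (\<forall>b \<in># f. snd b > 0)"

text \<open>The critical series C(f) = sum_i x^alpha_i - sum_i x^(alpha_i + l_i), a finite integer
  combination of symbols x^g, represented by its coefficient function g -> coefficient of x^g.\<close>
definition critical_series :: "barcode \<Rightarrow> real \<Rightarrow> int" where
  "critical_series f g =
     int (size (filter_mset (\<lambda>b. fst b = g) f))
   - int (size (filter_mset (\<lambda>b. fst b + snd b = g) f))"

end

theory Submission
  imports Defs
begin

lemma cs_formula:
  assumes "\<forall>b \<in># f. snd b = l"
  shows "critical_series f g = int (count f (g,l)) - int (count f (g-l,l))"
proof -
  have 1: "filter_mset (\<lambda>b. fst b = g) f = filter_mset (\<lambda>b. b = (g,l)) f"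
    by (rule filter_mset_cong) (use assms in auto)
  have 2: "filter_mset (\<lambda>b. fst b + snd b = g) f = filter_mset (\<lambda>b. b = (g-l,l)) f"
    by (rule filter_mset_cong) (use assms in auto)
  show ?thesis unfolding critical_series_def 1 2 filter_eq_replicate_mset by simp
qed

theorem proposition11:
  fixes l :: real
  assumes "l > 0"
  shows "inj_on critical_series
           {f :: barcode. is_barcode f \<and> (\<forall>b \<in># f. snd b = l)}"
proof (rule inj_onI)
  fix f1 f2 :: barcode
  assume A1: "f1 \<in> {f :: barcode. is_barcode f \<and> (\<forall>b \<in># f. snd b = l)}"
     and A2: "f2 \<in> {f :: barcode. is_barcode f \<and> (\<forall>b \<in># f. snd b = l)}"
     and E: "critical_series f1 = critical_series f2"
  have h1: "\<forall>b \<in># f1. snd b = l" and h2: "\<forall>b \<in># f2. snd b = l" using A1 A2 by auto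
  define d where "d a = int (count f1 (a,l)) - int (count f2 (a,l))" for a
  have rec: "d a = d (a - l)" for a
    using cs_formula[OF h1, of a] cs_formula[OF h2, of a] E unfolding d_def by simp
  define S where "S = {a. d a \<noteq> 0}"
  have "S \<subseteq> fst ` (set_mset f1 \<union> set_mset f2)"
  proof
    fix a assume "a \<in> S"
    then have "count f1 (a,l) \<noteq> count f2 (a,l)" unfolding S_def d_def by (auto simp: not_in_iff)
    then have "(a,l) \<in> set_mset f1 \<union> set_mset f2" by (metis UnI1 UnI2 not_in_iff)
    then show "a \<in> fst ` (set_mset f1 \<union> set_mset f2)" by force
  qed
  hence fin: "finite S" by (rule finite_subset) auto
  have Sempty: "S = {}"
  proof (rule ccontr)
    assume "S \<noteq> {}"
    define m where "m = Min S"
    have "m \<in> S" using fin \<open>S \<noteq> {}\<close> unfolding m_def by simp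
    hence "m - l \<in> S" using rec[of m] unfolding S_def by simp
    hence "m \<le> m - l" using fin unfolding m_def by simp
    thus False using assms by simp
  qed
  show "f1 = f2"
  proof (rule multiset_eqI)
    fix x :: "real \<times> real"
    obtain a b where x: "x = (a,b)" by force
    show "count f1 x = count f2 x"
    proof (cases "b = l")
      case True
      have "d a = 0" using Sempty unfolding S_def by auto
      thus ?thesis using True x unfolding d_def by simp
    next
      case False
      hence "x \<notin># f1" "x \<notin># f2" using h1 h2 x by auto
      thus ?thesis by (simp add: not_in_iff)
    qed
  qed
qed

end
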